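(* Let $(\mathcal S,\mathcal A,P,r)$ be a weakly communicating MDP and let $(g^\star,h^\star)$ be a solution of the modified Bellman equations. Let $f:\mathbb R^n\to\mathbb R$ be continuous with $f(x+c\mathbf 1)=f(x)+c$ for all $x,c$. Let $h^0\in\mathbb R^n$, $\lambda_k=\frac{2}{k+2}$, and for $k\ge1$ \[h^k=\lambda_{k-1}h^0+(1-\lambda_{k-1})\big(Th^{k-1}-f(h^{k-1})\mathbf 1\big)\] (Anchored Relative Value Iteration), and let $\pi_k$ be a greedy policy, $T^{\pi_k}h^k=Th^k$. Then for $k\ge1$, \[\|g^\star-g^{\pi_k}\|_\infty\le\|Th^k-h^k-g^\star\|_\infty\le\frac{8}{k+1}\|h^0-h^\star\|_\infty.\] Furthermore, if the MDP is unichain, then $h^k\to h^\infty$ and $f(h^k)\mathbf 1\to g^\star$ for some solution $(g^\star,h^\infty)$ of the modified Bellman equations.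
   Context: An MDP $(\mathcal S,\mathcal A,P,r)$ has finite state space $\mathcal S$ ($|\mathcal S|=n$, functions identified with $\mathbb R^n$), finite action space, transition probabilities $P(s'\mid s,a)$ and bounded reward $r$. For a policy $\pi$: $r^\pi(s)=\sum_a\pi(a\mid s)r(s,a)$, $\mathcal P^\pi(s,s')=\sum_a\pi(a\mid s)P(s'\mid s,a)$, $g^\pi(s)=\liminf_{T\to\infty}\frac1T\mathbb E_\pi[\sum_{t=0}^{T-1}r(s_t,a_t)\mid s_0=s]$, $g^\star=\max_\pi g^\pi$. $T^\pi V=r^\pi+\mathcal P^\pi V$, $(TV)(s)=\max_a\{r(s,a)+\sum_{s'}P(s'\mid s,a)V(s')\}$, $\mathbf 1$ the all-ones vector. A pair $(g,h)$ solves the modified Bellman equations if $\max_a\sum_{s'}P(s'\mid s,a)g(s')=g(s)$ and $\max_a\{r(s,a)+\sum_{s'}P(s'\mid s,a)h(s')\}=h(s)+g(s)$ for all $s$, with some policy attaining both maxima simultaneously; the first component of any solution equals $g^\star$. Weakly communicating: there is a closed set of states each accessible from every other in it under some deterministic policy, plus a possibly empty set transient under every policy. Unichain: every deterministic policy induces a chain with a single irreducible recurrent class plus possibly transient states. *)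

theory Defs
  imports "HOL-Analysis.Analysis"
begin

definition mdp :: "('s::finite \<Rightarrow> 'a::finite \<Rightarrow> 's \<Rightarrow> real) \<Rightarrow> bool" where
  "mdp P \<longleftrightarrow> (\<forall>s a s'. P s a s' \<ge> 0) \<and> (\<forall>s a. (\<Sum>s'\<in>UNIV. P s a s') = 1)"

text \<open>Stationary (possibly randomized) Markov policy: \<pi> s a = probability of action a in state s.\<close>
definition policy :: "('s::finite \<Rightarrow> 'a::finite \<Rightarrow> real) \<Rightarrow> bool" where
  "policy \<pi> \<longleftrightarrow> (\<forall>s a. \<pi> s a \<ge> 0) \<and> (\<forall>s. (\<Sum>a\<in>UNIV. \<pi> s a) = 1)"

definition r_pol :: "('s::finite \<Rightarrow> 'a::finite \<Rightarrow> real) \<Rightarrow> ('s \<Rightarrow> 'a \<Rightarrow> real) \<Rightarrow> 's \<Rightarrow> real" where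
  "r_pol r \<pi> s = (\<Sum>a\<in>UNIV. \<pi> s a * r s a)"

definition P_pol :: "('s::finite \<Rightarrow> 'a::finite \<Rightarrow> 's \<Rightarrow> real) \<Rightarrow> ('s \<Rightarrow> 'a \<Rightarrow> real) \<Rightarrow> 's \<Rightarrow> 's \<Rightarrow> real" where
  "P_pol P \<pi> s s' = (\<Sum>a\<in>UNIV. \<pi> s a * P s a s')"

fun state_dist :: "('s::finite \<Rightarrow> 'a::finite \<Rightarrow> 's \<Rightarrow> real) \<Rightarrow> ('s \<Rightarrow> 'a \<Rightarrow> real) \<Rightarrow> 's \<Rightarrow> nat \<Rightarrow> 's \<Rightarrow> real" where
  "state_dist P \<pi> s0 0 s = (if s = s0 then 1 else 0)"
| "state_dist P \<pi> s0 (Suc t) s = (\<Sum>x\<in>UNIV. state_dist P \<pi> s0 t x * P_pol P \<pi> x s)"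

definition exp_reward :: "('s::finite \<Rightarrow> 'a::finite \<Rightarrow> 's \<Rightarrow> real) \<Rightarrow> ('s \<Rightarrow> 'a \<Rightarrow> real) \<Rightarrow> ('s \<Rightarrow> 'a \<Rightarrow> real) \<Rightarrow> 's \<Rightarrow> nat \<Rightarrow> real" where
  "exp_reward P r \<pi> s0 t = (\<Sum>x\<in>UNIV. state_dist P \<pi> s0 t x * r_pol r \<pi> x)"

text \<open>Average-reward gain g^\<pi>(s) = liminf_T (1/T) E_pi[sum_{t<T} r(s_t,a_t) | s_0 = s]
  (the sequence is bounded, so the extended-real liminf is finite).\<close>
definition gain :: "('s::finite \<Rightarrow> 'a::finite \<Rightarrow> 's \<Rightarrow> real) \<Rightarrow> ('s \<Rightarrow> 'a \<Rightarrow> real) \<Rightarrow> ('s \<Rightarrow> 'a \<Rightarrow> real) \<Rightarrow> real^'s" where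
  "gain P r \<pi> = (\<chi> s. real_of_ereal
      (liminf (\<lambda>T::nat. ereal ((1 / real T) * (\<Sum>t<T. exp_reward P r \<pi> s t)))))"

definition bellman :: "('s::finite \<Rightarrow> 'a::finite \<Rightarrow> 's \<Rightarrow> real) \<Rightarrow> ('s \<Rightarrow> 'a \<Rightarrow> real) \<Rightarrow> real^'s \<Rightarrow> real^'s" where
  "bellman P r V = (\<chi> s. Max (range (\<lambda>a. r s a + (\<Sum>s'\<in>UNIV. P s a s' * V $ s'))))"

definition bellman_pol :: "('s::finite \<Rightarrow> 'a::finite \<Rightarrow> 's \<Rightarrow> real) \<Rightarrow> ('s \<Rightarrow> 'a \<Rightarrow> real) \<Rightarrow> ('s \<Rightarrow> 'a \<Rightarrow> real) \<Rightarrow> real^'s \<Rightarrow> real^'s" where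
  "bellman_pol P r \<pi> V = (\<chi> s. r_pol r \<pi> s + (\<Sum>s'\<in>UNIV. P_pol P \<pi> s s' * V $ s'))"

text \<open>Modified Bellman equations; the simultaneous maximizer is a deterministic policy d.\<close>
definition mod_bellman :: "('s::finite \<Rightarrow> 'a::finite \<Rightarrow> 's \<Rightarrow> real) \<Rightarrow> ('s \<Rightarrow> 'a \<Rightarrow> real) \<Rightarrow> real^'s \<Rightarrow> real^'s \<Rightarrow> bool" where
  "mod_bellman P r g h \<longleftrightarrow>
     (\<forall>s. Max (range (\<lambda>a. \<Sum>s'\<in>UNIV. P s a s' * g $ s')) = g $ s) \<and>
     (\<forall>s. Max (range (\<lambda>a. r s a + (\<Sum>s'\<in>UNIV. P s a s' * h $ s'))) = h $ s + g $ s) \<and>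
     (\<exists>d::'s \<Rightarrow> 'a. \<forall>s.
        (\<Sum>s'\<in>UNIV. P s (d s) s' * g $ s') = g $ s \<and>
        r s (d s) + (\<Sum>s'\<in>UNIV. P s (d s) s' * h $ s') = h $ s + g $ s)"

definition det_pol :: "('s \<Rightarrow> 'a) \<Rightarrow> 's \<Rightarrow> 'a \<Rightarrow> real" where
  "det_pol d s a = (if a = d s then 1 else 0)"

definition edges :: "('s::finite \<Rightarrow> 'a::finite \<Rightarrow> 's \<Rightarrow> real) \<Rightarrow> ('s \<Rightarrow> 'a \<Rightarrow> real) \<Rightarrow> ('s \<times> 's) set" where
  "edges P \<pi> = {(x, y). P_pol P \<pi> x y > 0}"

text \<open>In a finite Markov chain, state s is transient iff some state reachable from s
  cannot reach s; it is recurrent otherwise.\<close>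
definition transient :: "('s::finite \<Rightarrow> 'a::finite \<Rightarrow> 's \<Rightarrow> real) \<Rightarrow> ('s \<Rightarrow> 'a \<Rightarrow> real) \<Rightarrow> 's \<Rightarrow> bool" where
  "transient P \<pi> s \<longleftrightarrow> (\<exists>y. (s, y) \<in> (edges P \<pi>)\<^sup>* \<and> (y, s) \<notin> (edges P \<pi>)\<^sup>*)"

definition weakly_communicating :: "('s::finite \<Rightarrow> 'a::finite \<Rightarrow> 's \<Rightarrow> real) \<Rightarrow> bool" where
  "weakly_communicating P \<longleftrightarrow> (\<exists>C::'s set.
     (\<forall>s\<in>C. \<forall>a s'. P s a s' > 0 \<longrightarrow> s' \<in> C) \<and>
     (\<forall>s\<in>C. \<forall>s'\<in>C. \<exists>d::'s \<Rightarrow> 'a. (s, s') \<in> (edges P (det_pol d))\<^sup>*) \<and>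
     (\<forall>s\<in>- C. \<forall>\<pi>. policy \<pi> \<longrightarrow> transient P \<pi> s))"

text \<open>Unichain: every deterministic policy has exactly one recurrent class
  (the recurrent states are pairwise mutually accessible), plus transient states.\<close>
definition unichain :: "('s::finite \<Rightarrow> 'a::finite \<Rightarrow> 's \<Rightarrow> real) \<Rightarrow> bool" where
  "unichain P \<longleftrightarrow> (\<forall>d::'s \<Rightarrow> 'a. \<forall>x y.
     \<not> transient P (det_pol d) x \<and> \<not> transient P (det_pol d) y \<longrightarrow>
     (x, y) \<in> (edges P (det_pol d))\<^sup>*)"

fun arvi :: "('s::finite \<Rightarrow> 'a::finite \<Rightarrow> 's \<Rightarrow> real) \<Rightarrow> ('s \<Rightarrow> 'a \<Rightarrow> real) \<Rightarrow> (real^'s \<Rightarrow> real) \<Rightarrow> real^'s \<Rightarrow> nat \<Rightarrow> real^'s" where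
  "arvi P r f h0 0 = h0"
| "arvi P r f h0 (Suc k) =
     (2 / (real k + 2)) *\<^sub>R h0 +
     (1 - 2 / (real k + 2)) *\<^sub>R (bellman P r (arvi P r f h0 k) - vec (f (arvi P r f h0 k)))"

end

theory Submission
  imports Defs
begin

lemma infnorm_le_cart:
  fixes x :: "real^'n"
  assumes "\<And>i. \<bar>x$i\<bar> \<le> c" shows "infnorm x \<le> c"
  unfolding infnorm_cart by (rule cSup_least) (auto simp: assms)

lemma mdpD: assumes "mdp P" shows "P s a s' \<ge> 0" "(\<Sum>s'\<in>UNIV. P s a s') = 1"
  using assms unfolding mdp_def by auto

lemma sumP_const: assumes "mdp P" shows "(\<Sum>s'\<in>UNIV. P s a s' * c) = c"
  using mdpD(2)[OF assms] by (simp add: sum_distrib_right[symmetric])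

lemma sumP_add_vec: assumes "mdp P"
  shows "(\<Sum>s'\<in>UNIV. P s a s' * (v + vec c) $ s') = (\<Sum>s'\<in>UNIV. P s a s' * v $ s') + c"
  using sumP_const[OF assms, of s a c] by (simp add: algebra_simps sum.distrib)

lemma sumP_abs: assumes "mdp P"
  shows "\<bar>\<Sum>s'\<in>UNIV. P s a s' * v $ s'\<bar> \<le> infnorm v"
proof -
  have "\<bar>\<Sum>s'\<in>UNIV. P s a s' * v $ s'\<bar> \<le> (\<Sum>s'\<in>UNIV. \<bar>P s a s' * v $ s'\<bar>)" by (rule sum_abs)
  also have "\<dots> \<le> (\<Sum>s'\<in>UNIV. P s a s' * infnorm v)"
    by (rule sum_mono) (simp add: abs_mult mdpD[OF assms] component_le_infnorm_cart mult_left_mono)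
  also have "\<dots> = infnorm v" by (rule sumP_const[OF assms])
  finally show ?thesis .
qed

lemma Max_range_ge: fixes g :: "'a::finite \<Rightarrow> real" shows "g a \<le> Max (range g)"
  by (rule Max_ge) auto

lemma Max_range_in: fixes g :: "'a::finite \<Rightarrow> real" shows "\<exists>a. Max (range g) = g a"
proof -
  have "Max (range g) \<in> range g" by (rule Max_in) auto
  then show ?thesis by (metis imageE)
qed

lemma Max_range_diff: fixes F G :: "'a::finite \<Rightarrow> real"
  assumes "\<And>a. F a - G a \<le> d" shows "Max (range F) - Max (range G) \<le> d"
proof -
  obtain a where "Max (range F) = F a" using Max_range_in by blast
  moreover have "G a \<le> Max (range G)" by (rule Max_range_ge)
  ultimately show ?thesis using assms[of a] by linarith
qed

lemma bellman_shift: assumes "mdp P"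
  shows "bellman P r (v + vec c) = bellman P r v + vec c"
proof -
  have "Max (range (\<lambda>a. r s a + (\<Sum>s'\<in>UNIV. P s a s' * (v + vec c) $ s'))) =
        Max (range (\<lambda>a. r s a + (\<Sum>s'\<in>UNIV. P s a s' * v $ s'))) + c" for s
    unfolding sumP_add_vec[OF assms] add.assoc[symmetric]
    by (rule Max_add_commute) auto
  then show ?thesis unfolding bellman_def by (simp add: vec_eq_iff)
qed

lemma bellman_nonexp: assumes "mdp P"
  shows "infnorm (bellman P r x - bellman P r y) \<le> infnorm (x - y)"
proof (rule infnorm_le_cart)
  fix s
  let ?F = "\<lambda>v a. r s a + (\<Sum>s'\<in>UNIV. P s a s' * v $ s')"
  have d: "?F x a - ?F y a = (\<Sum>s'\<in>UNIV. P s a s' * (x - y) $ s')" for a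
    by (simp add: algebra_simps sum_subtractf)
  have "Max (range (?F x)) - Max (range (?F y)) \<le> infnorm (x - y)"
    by (rule Max_range_diff) (metis d sumP_abs[OF assms] abs_le_D1)
  moreover have "Max (range (?F y)) - Max (range (?F x)) \<le> infnorm (x - y)"
    apply (rule Max_range_diff)
    using sumP_abs[OF assms, of s _ "y - x"] d[of] infnorm_sub[of x y]
    by (simp add: algebra_simps sum_subtractf abs_le_iff)
  ultimately show "\<bar>(bellman P r x - bellman P r y) $ s\<bar> \<le> infnorm (x - y)"
    unfolding bellman_def by simp
qed

lemma closed_has_recurrent:
  fixes E :: "('s::finite \<times> 's) set"
  assumes x0: "x0 \<in> A" and cl: "\<forall>x\<in>A. \<forall>y. (x,y) \<in> E \<longrightarrow> y \<in> A"
  shows "\<exists>x\<in>A. \<forall>y. (x,y) \<in> E\<^sup>* \<longrightarrow> (y,x) \<in> E\<^sup>*"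
proof -
  define R where "R x = {y. (x,y) \<in> E\<^sup>*}" for x
  obtain x where xA: "x \<in> A" and xmin: "\<forall>z. z \<in> A \<longrightarrow> card (R x) \<le> card (R z)"
    using ex_has_least_nat[of "\<lambda>z. z \<in> A" x0 "\<lambda>z. card (R z)"] x0 by blast
  have clr: "y \<in> A" if "(x', y) \<in> E\<^sup>*" "x' \<in> A" for x' y
    using that by (induction rule: rtrancl_induct) (use cl in auto)
  show ?thesis
  proof (intro bexI[OF _ xA] allI impI)
    fix y assume xy: "(x,y) \<in> E\<^sup>*"
    show "(y,x) \<in> E\<^sup>*"
    proof (rule ccontr)
      assume nyx: "(y,x) \<notin> E\<^sup>*"
      have "R y \<subset> R x" unfolding R_def using xy nyx by (auto intro: rtrancl_trans)
      then have "card (R y) < card (R x)" by (rule psubset_card_mono[OF finite])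
      moreover have "y \<in> A" using clr[OF xy xA] .
      ultimately show False using xmin by fastforce
    qed
  qed
qed

lemma P_pol_det: "P_pol P (det_pol d) x y = P x (d x) y"
proof -
  have "(\<Sum>a\<in>UNIV. det_pol d x a * P x a y) = (\<Sum>a\<in>UNIV. if a = d x then P x a y else 0)"
    by (rule sum.cong) (auto simp: det_pol_def)
  then show ?thesis unfolding P_pol_def by simp
qed

lemma edges_det: "edges P (det_pol d) = {(x,y). P x (d x) y > 0}"
  unfolding edges_def P_pol_det by simp

lemma policy_det: "policy (det_pol d)"
  unfolding policy_def det_pol_def by (simp add: if_distrib cong: if_cong)

lemma not_transient_iff: "\<not> transient P \<pi> x \<longleftrightarrow> (\<forall>y. (x,y) \<in> (edges P \<pi>)\<^sup>* \<longrightarrow> (y,x) \<in> (edges P \<pi>)\<^sup>*)"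
  unfolding transient_def by auto

lemma det_closed_recurrent:
  assumes "x0 \<in> A" "\<forall>x\<in>A. \<forall>y. P x (d x) y > 0 \<longrightarrow> y \<in> A"
  shows "\<exists>x\<in>A. \<not> transient P (det_pol d) x"
  unfolding not_transient_iff
  by (rule closed_has_recurrent[OF assms(1)]) (use assms(2) in \<open>auto simp: edges_det\<close>)

lemma sum_forces_eq:
  assumes "mdp P" and le: "\<forall>y. P x a y > 0 \<longrightarrow> u y \<le> c"
    and ge: "(\<Sum>y\<in>UNIV. P x a y * u y) \<ge> c"
  shows "\<forall>y. P x a y > 0 \<longrightarrow> u y = c"
proof -
  have nn: "\<forall>y\<in>UNIV. P x a y * (c - u y) \<ge> 0"
    using le mdpD(1)[OF assms(1)] by (metis diff_ge_0_iff_ge less_eq_real_def mult_eq_0_iff mult_nonneg_nonneg)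
  have "(\<Sum>y\<in>UNIV. P x a y * (c - u y)) = c * (\<Sum>y\<in>UNIV. P x a y) - (\<Sum>y\<in>UNIV. P x a y * u y)"
    by (simp add: algebra_simps sum_subtractf sum_distrib_left)
  also have "\<dots> \<le> 0" using ge mdpD(2)[OF assms(1)] by simp
  finally have "(\<Sum>y\<in>UNIV. P x a y * (c - u y)) = 0" using sum_nonneg[of UNIV] nn by (meson order_antisym)
  then have z: "P x a y * (c - u y) = 0" for y
    using sum_nonneg_eq_0_iff[of UNIV "\<lambda>y. P x a y * (c - u y)"] nn by simp
  show ?thesis
  proof (intro allI impI)
    fix y assume "P x a y > 0" then show "u y = c" using z[of y] by simp
  qed
qed

lemma gs_const:
  fixes P :: "'s::finite \<Rightarrow> 'a::finite \<Rightarrow> 's \<Rightarrow> real"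
  assumes mdp: "mdp P" and wc: "weakly_communicating P" and mb: "mod_bellman P r gs hs"
  shows "\<exists>m. gs = vec m"
proof -
  define g where "g s = gs $ s" for s
  have G1: "(\<Sum>y\<in>UNIV. P s a y * g y) \<le> g s" for s a
  proof -
    have "Max (range (\<lambda>a. \<Sum>y\<in>UNIV. P s a y * gs $ y)) = gs $ s" using mb unfolding mod_bellman_def by blast
    then show ?thesis using Max_range_ge[of "\<lambda>a. \<Sum>y\<in>UNIV. P s a y * gs $ y" a] unfolding g_def by simp
  qed
  obtain d :: "'s \<Rightarrow> 'a" where dg: "\<And>s. (\<Sum>y\<in>UNIV. P s (d s) y * g y) = g s"
    using mb unfolding mod_bellman_def g_def by blast
  obtain C :: "'s set" where Ccl: "\<forall>s\<in>C. \<forall>a s'. P s a s' > 0 \<longrightarrow> s' \<in> C"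
    and Ccom: "\<forall>s\<in>C. \<forall>s'\<in>C. \<exists>d::'s \<Rightarrow> 'a. (s, s') \<in> (edges P (det_pol d))\<^sup>*"
    and Ctr: "\<forall>s\<in>- C. \<forall>\<pi>. policy \<pi> \<longrightarrow> transient P \<pi> s"
    using wc unfolding weakly_communicating_def by blast
  have inC: "x \<in> C" if "\<not> transient P (det_pol d') x" for x and d' :: "'s \<Rightarrow> 'a"
    using Ctr that policy_det by blast
  obtain x0 where "\<not> transient P (det_pol d) x0"
    using det_closed_recurrent[of undefined UNIV P d] by auto
  then have Cne: "C \<noteq> {}" using inC by blast
  define m where "m = Min (g ` C)"
  have "m \<in> g ` C" unfolding m_def using Cne by (intro Min_in) auto
  then obtain s1 where s1C: "s1 \<in> C" and s1m: "g s1 = m" by auto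
  have mle: "m \<le> g s" if "s \<in> C" for s unfolding m_def using that by simp
  have stepC: "y \<in> C \<and> g y = m" if "x \<in> C" "g x = m" "P x a y > 0" for x a y
  proof -
    have "y \<in> C" using Ccl that by blast
    have "\<forall>y. P x a y > 0 \<longrightarrow> - g y = - m"
    proof (rule sum_forces_eq[OF mdp])
      show "\<forall>y. P x a y > 0 \<longrightarrow> - g y \<le> - m" using Ccl that(1) mle by fastforce
      show "(\<Sum>y\<in>UNIV. P x a y * - g y) \<ge> - m" using G1[of x a] that(2) by (simp add: sum_negf)
    qed
    then show ?thesis using \<open>y \<in> C\<close> that(3) by auto
  qed
  have onC: "g s = m" if "s \<in> C" for s
  proof -
    have "\<exists>d'::'s \<Rightarrow> 'a. (s1, s) \<in> (edges P (det_pol d'))\<^sup>*" using Ccom s1C that by simp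
    then obtain d' :: "'s \<Rightarrow> 'a" where "(s1, s) \<in> (edges P (det_pol d'))\<^sup>*" by blast
    then have "s \<in> C \<and> g s = m"
    proof (induction rule: rtrancl_induct)
      case base show ?case using s1C s1m by simp
    next
      case (step y z) then show ?case using stepC[of y "d' y" z] by (simp add: edges_det)
    qed
    then show ?thesis by simp
  qed
  define M where "M = Max (range g)"
  define Mn where "Mn = Min (range g)"
  have "M \<in> range g" unfolding M_def by (rule Max_in) auto
  then obtain sM where sM: "g sM = M" by auto
  have "Mn \<in> range g" unfolding Mn_def by (rule Min_in) auto
  then obtain sN where sN: "g sN = Mn" by auto
  have gM: "g s \<le> M" for s unfolding M_def by (rule Max_ge) auto
  have gN: "Mn \<le> g s" for s unfolding Mn_def by (rule Min_le) auto
  have "\<exists>x\<in>{s. g s = M}. \<not> transient P (det_pol d) x"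
  proof (rule det_closed_recurrent)
    show "sM \<in> {s. g s = M}" using sM by simp
    show "\<forall>x\<in>{s. g s = M}. \<forall>y. 0 < P x (d x) y \<longrightarrow> y \<in> {s. g s = M}"
    proof (intro ballI allI impI)
      fix x y assume "x \<in> {s. g s = M}" "P x (d x) y > 0"
      have "\<forall>y. P x (d x) y > 0 \<longrightarrow> g y = M"
        by (rule sum_forces_eq[OF mdp]) (use gM dg \<open>x \<in> {s. g s = M}\<close> in auto)
      then show "y \<in> {s. g s = M}" using \<open>P x (d x) y > 0\<close> by simp
    qed
  qed
  then have Mm: "M = m" using inC onC by auto
  have "\<exists>x\<in>{s. g s = Mn}. \<not> transient P (det_pol d) x"
  proof (rule det_closed_recurrent)
    show "sN \<in> {s. g s = Mn}" using sN by simp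
    show "\<forall>x\<in>{s. g s = Mn}. \<forall>y. 0 < P x (d x) y \<longrightarrow> y \<in> {s. g s = Mn}"
    proof (intro ballI allI impI)
      fix x y assume xx: "x \<in> {s. g s = Mn}" and "P x (d x) y > 0"
      have "\<forall>y. P x (d x) y > 0 \<longrightarrow> - g y = - Mn"
      proof (rule sum_forces_eq[OF mdp])
        show "\<forall>y. P x (d x) y > 0 \<longrightarrow> - g y \<le> - Mn" using gN by auto
        show "(\<Sum>y\<in>UNIV. P x (d x) y * - g y) \<ge> - Mn" using dg[of x] xx by (simp add: sum_negf)
      qed
      then show "y \<in> {s. g s = Mn}" using \<open>P x (d x) y > 0\<close> by simp
    qed
  qed
  then have Nm: "Mn = m" using inC onC by auto
  have "gs $ s = vec m $ s" for s using gM[of s] gN[of s] Mm Nm unfolding g_def by simp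
  then have "gs = vec m" by (simp add: vec_eq_iff)
  then show ?thesis ..
qed

lemma infnorm_comb:
  fixes u v :: "real^'n"
  assumes "0 \<le> l" "l \<le> 1"
  shows "infnorm (l *\<^sub>R u + (1 - l) *\<^sub>R v) \<le> l * infnorm u + (1 - l) * infnorm v"
  using infnorm_triangle[of "l *\<^sub>R u" "(1 - l) *\<^sub>R v"] assms by (simp add: infnorm_mul)

lemma halpern:
  fixes S :: "real^'n \<Rightarrow> real^'n" and y :: "nat \<Rightarrow> real^'n"
  assumes ne: "\<And>x y. infnorm (S x - S y) \<le> infnorm (x - y)"
    and fp: "S p = p"
    and y0: "y 0 = x0"
    and ys: "\<And>k. y (Suc k) = (2/(real k+2)) *\<^sub>R x0 + (1 - 2/(real k+2)) *\<^sub>R S (y k)"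
  shows "infnorm (y k - p) \<le> infnorm (x0 - p)"
    and "infnorm (S (y k) - y k) \<le> 8/(real k+1) * infnorm (x0 - p)"
proof -
  define D where "D = infnorm (x0 - p)"
  define l where "l k = 2/(real k+2)" for k :: nat
  have l01: "0 \<le> l k" "l k \<le> 1" for k unfolding l_def by (auto simp: field_simps)
  have D0: "D \<ge> 0" unfolding D_def by (rule infnorm_pos_le)
  have yb: "infnorm (y k - p) \<le> D" for k
  proof (induction k)
    case 0 then show ?case by (simp add: y0 D_def)
  next
    case (Suc k)
    have "y (Suc k) - p = l k *\<^sub>R (x0 - p) + (1 - l k) *\<^sub>R (S (y k) - S p)"
      unfolding ys l_def fp by (simp add: algebra_simps)
    then have "infnorm (y (Suc k) - p) \<le> l k * D + (1 - l k) * infnorm (S (y k) - S p)"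
      using infnorm_comb[OF l01] D_def by metis
    also have "\<dots> \<le> l k * D + (1 - l k) * D"
      using ne[of "y k" p] Suc l01[of k] by (intro add_left_mono mult_left_mono) auto
    finally show ?case by (simp add: algebra_simps)
  qed
  then show "infnorm (y k - p) \<le> infnorm (x0 - p)" unfolding D_def .
  have Sb: "infnorm (x0 - S (y k)) \<le> 2 * D" for k
  proof -
    have "infnorm (x0 - S (y k)) = infnorm ((x0 - p) + (S p - S (y k)))" by (simp add: fp)
    also have "\<dots> \<le> D + infnorm (S p - S (y k))" unfolding D_def by (rule infnorm_triangle)
    also have "\<dots> \<le> D + D" using ne[of p "y k"] yb[of k] infnorm_sub[of p "y k"] by simp
    finally show ?thesis by simp
  qed
  have ab: "infnorm (y (Suc k) - y k) \<le> 4 * real k * D / ((real k + 1) * (real k + 2))" for k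
  proof (induction k)
    case 0 then show ?case by (simp add: ys y0 infnorm_0)
  next
    case (Suc k)
    have eq: "y (Suc (Suc k)) - y (Suc k) = (l k - l (Suc k)) *\<^sub>R (S (y k) - x0) + (1 - l (Suc k)) *\<^sub>R (S (y (Suc k)) - S (y k))"
      unfolding ys[of "Suc k"] ys[of k] l_def by (simp add: algebra_simps)
    have "infnorm (y (Suc (Suc k)) - y (Suc k)) \<le> \<bar>l k - l (Suc k)\<bar> * infnorm (S (y k) - x0) + \<bar>1 - l (Suc k)\<bar> * infnorm (S (y (Suc k)) - S (y k))"
      unfolding eq using infnorm_triangle by (metis infnorm_mul)
    also have "\<dots> \<le> (l k - l (Suc k)) * (2 * D) + (1 - l (Suc k)) * (4 * real k * D / ((real k + 1) * (real k + 2)))"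
    proof (rule add_mono)
      have "l k - l (Suc k) \<ge> 0" unfolding l_def by (simp add: field_simps)
      then show "\<bar>l k - l (Suc k)\<bar> * infnorm (S (y k) - x0) \<le> (l k - l (Suc k)) * (2 * D)"
        using Sb[of k] infnorm_sub[of "S (y k)" x0] by (simp add: mult_left_mono)
      show "\<bar>1 - l (Suc k)\<bar> * infnorm (S (y (Suc k)) - S (y k)) \<le> (1 - l (Suc k)) * (4 * real k * D / ((real k + 1) * (real k + 2)))"
      proof -
        have "infnorm (S (y (Suc k)) - S (y k)) \<le> 4 * real k * D / ((real k + 1) * (real k + 2))"
          using ne[of "y (Suc k)" "y k"] Suc by linarith
        then show ?thesis using l01[of "Suc k"] by (simp only: abs_of_nonneg) (rule mult_left_mono; simp)
      qed
    qed
    also have "\<dots> = 4 * real (Suc k) * D / ((real (Suc k) + 1) * (real (Suc k) + 2))"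
    proof -
      have p: "real k + 1 > 0" "real k + 2 > 0" "real k + 3 > 0" by auto
      have "(2/(real k+2) - 2/(real (Suc k)+2)) * (2 * D) + (1 - 2/(real (Suc k)+2)) * (4 * real k * D / ((real k + 1) * (real k + 2)))
        = 4 * (real k + 1) * D / ((real k + 2) * (real k + 3))"
        using p by (simp add: divide_simps) (simp add: algebra_simps)
      then show ?thesis unfolding l_def by (simp add: algebra_simps)
    qed
    finally show ?case .
  qed
  have "infnorm (S (y k) - y k) \<le> infnorm (S (y k) - y (Suc k)) + infnorm (y (Suc k) - y k)"
    using infnorm_triangle[of "S (y k) - y (Suc k)" "y (Suc k) - y k"] by simp
  also have "S (y k) - y (Suc k) = l k *\<^sub>R (S (y k) - x0)" unfolding ys l_def by (simp add: algebra_simps)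
  also have "infnorm (l k *\<^sub>R (S (y k) - x0)) \<le> l k * (2 * D)"
    using Sb[of k] infnorm_sub[of "S (y k)" x0] l01[of k] by (simp add: infnorm_mul mult_left_mono)
  finally have "infnorm (S (y k) - y k) \<le> l k * (2 * D) + 4 * real k * D / ((real k + 1) * (real k + 2))"
    using ab[of k] by linarith
  also have "\<dots> \<le> 8/(real k+1) * D"
  proof -
    have "l k * (2 * D) + 4 * real k * D / ((real k + 1) * (real k + 2)) = 4 * D * (2 * real k + 1) / ((real k + 1) * (real k + 2))"
    proof -
      have p: "real k + 1 > 0" "real k + 2 > 0" by auto
      show ?thesis unfolding l_def using p by (simp add: divide_simps) (simp add: algebra_simps)
    qed
    also have "\<dots> \<le> 8/(real k+1) * D"
    proof -
      have p: "real k + 1 > 0" "real k + 2 > 0" by auto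
      have "4 * D * (2 * real k + 1) \<le> 8 * D * (real k + 2)" using D0 by (simp add: algebra_simps)
      then have "4 * D * (2 * real k + 1) / ((real k + 1) * (real k + 2)) \<le> 8 * D * (real k + 2) / ((real k + 1) * (real k + 2))"
        using p by (intro divide_right_mono) auto
      also have "\<dots> = 8/(real k+1) * D" using p by (simp add: divide_simps)
      finally show ?thesis .
    qed
    finally show ?thesis .
  qed
  finally show "infnorm (S (y k) - y k) \<le> 8/(real k+1) * infnorm (x0 - p)" unfolding D_def .
qed

lemma ereal_between:
  assumes "ereal a \<le> x" "x \<le> ereal b" shows "a \<le> real_of_ereal x \<and> real_of_ereal x \<le> b"
  using assms by (cases x) auto

lemma liminf_between:
  fixes u :: "nat \<Rightarrow> real"
  assumes lo: "\<And>T. T \<ge> 1 \<Longrightarrow> a - c / real T \<le> u T" and hi: "\<And>T. T \<ge> 1 \<Longrightarrow> u T \<le> b + c / real T"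
  shows "a \<le> real_of_ereal (liminf (\<lambda>T. ereal (u T))) \<and> real_of_ereal (liminf (\<lambda>T. ereal (u T))) \<le> b"
proof (rule ereal_between)
  have l1: "(\<lambda>T. ereal (a - c / real T)) \<longlonglongrightarrow> ereal a"
    by (intro tendsto_ereal) (use tendsto_diff[OF tendsto_const lim_const_over_n[of c]] in simp)
  have l2: "(\<lambda>T. ereal (b + c / real T)) \<longlonglongrightarrow> ereal b"
    by (intro tendsto_ereal) (use tendsto_add[OF tendsto_const lim_const_over_n[of c]] in simp)
  have "ereal a = liminf (\<lambda>T. ereal (a - c / real T))" using lim_imp_Liminf[OF _ l1] by simp
  also have "\<dots> \<le> liminf (\<lambda>T. ereal (u T))"
    by (rule Liminf_mono) (use lo in \<open>auto simp: eventually_sequentially\<close>)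
  finally show "ereal a \<le> liminf (\<lambda>T. ereal (u T))" .
  have "liminf (\<lambda>T. ereal (u T)) \<le> liminf (\<lambda>T. ereal (b + c / real T))"
    by (rule Liminf_mono) (use hi in \<open>auto simp: eventually_sequentially\<close>)
  also have "\<dots> = ereal b" using lim_imp_Liminf[OF _ l2] by simp
  finally show "liminf (\<lambda>T. ereal (u T)) \<le> ereal b" .
qed

lemma gain_bound:
  fixes P :: "'s::finite \<Rightarrow> 'a::finite \<Rightarrow> 's \<Rightarrow> real"
  assumes mdp: "mdp P" and pol: "policy \<pi>" and gr: "bellman_pol P r \<pi> h = bellman P r h"
  shows "infnorm (vec m - gain P r \<pi>) \<le> infnorm (bellman P r h - h - vec m)"
proof -
  define eps where "eps = infnorm (bellman P r h - h - vec m)"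
  define B where "B = infnorm h"
  define e where "e x = (bellman P r h - h - vec m) $ x" for x
  have eb: "\<bar>e x\<bar> \<le> eps" for x unfolding e_def eps_def by (rule component_le_infnorm_cart)
  have hb: "\<bar>h $ x\<bar> \<le> B" for x unfolding B_def by (rule component_le_infnorm_cart)
  have Pp0: "P_pol P \<pi> x y \<ge> 0" for x y
    unfolding P_pol_def using pol mdpD(1)[OF mdp] by (auto simp: policy_def intro!: sum_nonneg)
  have Pp1: "(\<Sum>y\<in>UNIV. P_pol P \<pi> x y) = 1" for x
  proof -
    have "(\<Sum>y\<in>UNIV. P_pol P \<pi> x y) = (\<Sum>a\<in>UNIV. \<pi> x a * (\<Sum>y\<in>UNIV. P x a y))"
      unfolding P_pol_def sum_distrib_left mult.assoc by (rule sum.swap)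
    also have "\<dots> = 1" using mdpD(2)[OF mdp] pol by (simp add: policy_def)
    finally show ?thesis .
  qed
  have rew: "r_pol r \<pi> x = h $ x + m + e x - (\<Sum>y\<in>UNIV. P_pol P \<pi> x y * h $ y)" for x
  proof -
    have "bellman_pol P r \<pi> h $ x = bellman P r h $ x" using gr by simp
    then show ?thesis unfolding e_def bellman_pol_def by simp
  qed
  show ?thesis
  proof (rule infnorm_le_cart)
    fix s0
    define mu where "mu t x = state_dist P \<pi> s0 t x" for t x
    have mu0: "mu t x \<ge> 0" for t x
      unfolding mu_def by (induction t arbitrary: x) (auto intro!: sum_nonneg simp: Pp0)
    have mu1: "(\<Sum>x\<in>UNIV. mu t x) = 1" for t
    proof (induction t)
      case 0 then show ?case unfolding mu_def by simp
    next
      case (Suc t)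
      have "(\<Sum>x\<in>UNIV. mu (Suc t) x) = (\<Sum>y\<in>UNIV. mu t y * (\<Sum>x\<in>UNIV. P_pol P \<pi> y x))"
        unfolding mu_def state_dist.simps sum_distrib_left by (rule sum.swap)
      then show ?case using Suc Pp1 by simp
    qed
    define H where "H t = (\<Sum>x\<in>UNIV. mu t x * h $ x)" for t
    define E where "E t = (\<Sum>x\<in>UNIV. mu t x * e x)" for t
    have Hb: "\<bar>H t\<bar> \<le> B" for t
    proof -
      have "\<bar>H t\<bar> \<le> (\<Sum>x\<in>UNIV. \<bar>mu t x * h $ x\<bar>)" unfolding H_def by (rule sum_abs)
      also have "\<dots> \<le> (\<Sum>x\<in>UNIV. mu t x * B)"
        by (rule sum_mono) (simp add: abs_mult mu0 hb mult_left_mono)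
      also have "\<dots> = B" using mu1 by (simp add: sum_distrib_right[symmetric])
      finally show ?thesis .
    qed
    have Eb: "\<bar>E t\<bar> \<le> eps" for t
    proof -
      have "\<bar>E t\<bar> \<le> (\<Sum>x\<in>UNIV. \<bar>mu t x * e x\<bar>)" unfolding E_def by (rule sum_abs)
      also have "\<dots> \<le> (\<Sum>x\<in>UNIV. mu t x * eps)"
        by (rule sum_mono) (simp add: abs_mult mu0 eb mult_left_mono)
      also have "\<dots> = eps" using mu1 by (simp add: sum_distrib_right[symmetric])
      finally show ?thesis .
    qed
    have HS: "(\<Sum>x\<in>UNIV. mu t x * (\<Sum>y\<in>UNIV. P_pol P \<pi> x y * h $ y)) = H (Suc t)" for t
      unfolding H_def mu_def state_dist.simps sum_distrib_left sum_distrib_right mult.assoc by (rule sum.swap)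
    have er: "exp_reward P r \<pi> s0 t = H t - H (Suc t) + m + E t" for t
    proof -
      have "exp_reward P r \<pi> s0 t = (\<Sum>x\<in>UNIV. mu t x * r_pol r \<pi> x)"
        unfolding exp_reward_def mu_def ..
      also have "\<dots> = (\<Sum>x\<in>UNIV. mu t x * h $ x + mu t x * m + mu t x * e x
             - mu t x * (\<Sum>y\<in>UNIV. P_pol P \<pi> x y * h $ y))"
        by (rule sum.cong) (simp_all add: rew algebra_simps)
      also have "\<dots> = H t + (\<Sum>x\<in>UNIV. mu t x * m) + E t - (\<Sum>x\<in>UNIV. mu t x * (\<Sum>y\<in>UNIV. P_pol P \<pi> x y * h $ y))"
        unfolding H_def E_def by (simp only: sum.distrib sum_subtractf)
      also have "(\<Sum>x\<in>UNIV. mu t x * m) = m" using mu1 by (simp add: sum_distrib_right[symmetric])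
      finally show ?thesis unfolding HS by simp
    qed
    have tot: "(\<Sum>t<T. exp_reward P r \<pi> s0 t) = H 0 - H T + real T * m + (\<Sum>t<T. E t)" for T
    proof -
      have "(\<Sum>t<T. exp_reward P r \<pi> s0 t) = (\<Sum>t<T. H t - H (Suc t)) + (\<Sum>t<T. m) + (\<Sum>t<T. E t)"
        unfolding er by (simp add: sum.distrib)
      also have "(\<Sum>t<T. H t - H (Suc t)) = H 0 - H T"
        using sum_lessThan_telescope'[of H T] by simp
      finally show ?thesis by simp
    qed
    define u where "u T = (1 / real T) * (\<Sum>t<T. exp_reward P r \<pi> s0 t)" for T
    have ub: "\<bar>u T - m\<bar> \<le> eps + 2 * B / real T" if "T \<ge> 1" for T
    proof -
      have Tp: "real T > 0" using that by simp
      have "\<bar>(\<Sum>t<T. E t)\<bar> \<le> real T * eps"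
        using sum_abs[of E "{..<T}"] sum_mono[of "{..<T}" "\<lambda>t. \<bar>E t\<bar>" "\<lambda>t. eps"] Eb
        by (simp del: sum_abs)
      moreover have "\<bar>H 0 - H T\<bar> \<le> 2 * B" using Hb[of 0] Hb[of T] by linarith
      ultimately have "\<bar>(\<Sum>t<T. exp_reward P r \<pi> s0 t) - real T * m\<bar> \<le> real T * eps + 2 * B"
        unfolding tot by linarith
      then have "\<bar>(\<Sum>t<T. exp_reward P r \<pi> s0 t) - real T * m\<bar> / real T \<le> (real T * eps + 2 * B) / real T"
        using Tp by (intro divide_right_mono) auto
      moreover have "\<bar>(\<Sum>t<T. exp_reward P r \<pi> s0 t) - real T * m\<bar> / real T = \<bar>u T - m\<bar>"
        unfolding u_def using Tp by (simp add: field_simps abs_div)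
      moreover have "(real T * eps + 2 * B) / real T = eps + 2 * B / real T" using Tp by (simp add: field_simps)
      ultimately show ?thesis by simp
    qed
    have "m - eps \<le> real_of_ereal (liminf (\<lambda>T. ereal (u T))) \<and> real_of_ereal (liminf (\<lambda>T. ereal (u T))) \<le> m + eps"
    proof (rule liminf_between[where c = "2 * B"])
      fix T :: nat assume "T \<ge> 1"
      then have "\<bar>u T - m\<bar> \<le> eps + 2 * B / real T" by (rule ub)
      then show "m - eps - 2 * B / real T \<le> u T" "u T \<le> m + eps + 2 * B / real T"
        unfolding abs_le_iff by linarith+
    qed
    moreover have "gain P r \<pi> $ s0 = real_of_ereal (liminf (\<lambda>T. ereal (u T)))"
      unfolding gain_def u_def by simp
    ultimately show "\<bar>(vec m - gain P r \<pi>) $ s0\<bar> \<le> infnorm (bellman P r h - h - vec m)"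
      unfolding eps_def[symmetric] by (simp add: abs_le_iff)
  qed
qed

lemma unichain_unique:
  fixes P :: "'s::finite \<Rightarrow> 'a::finite \<Rightarrow> 's \<Rightarrow> real"
  assumes mdp: "mdp P" and uc: "unichain P" and mb: "mod_bellman P r gs hs"
    and sol: "bellman P r h = h + gs"
  shows "\<exists>c. h = hs + vec c"
proof -
  obtain dS :: "'s \<Rightarrow> 'a" where dS: "\<And>s. r s (dS s) + (\<Sum>y\<in>UNIV. P s (dS s) y * hs $ y) = hs $ s + gs $ s"
    using mb unfolding mod_bellman_def by blast
  have Ths: "Max (range (\<lambda>a. r s a + (\<Sum>y\<in>UNIV. P s a y * hs $ y))) = hs $ s + gs $ s" for s
    using mb unfolding mod_bellman_def by blast
  have Th: "Max (range (\<lambda>a. r s a + (\<Sum>y\<in>UNIV. P s a y * h $ y))) = h $ s + gs $ s" for s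
  proof -
    have "bellman P r h $ s = (h + gs) $ s" using sol by simp
    then show ?thesis unfolding bellman_def by simp
  qed
  have "\<forall>s. \<exists>a. Max (range (\<lambda>a. r s a + (\<Sum>y\<in>UNIV. P s a y * h $ y))) = r s a + (\<Sum>y\<in>UNIV. P s a y * h $ y)"
    by (intro allI Max_range_in)
  from choice[OF this] obtain d' :: "'s \<Rightarrow> 'a" where d': "\<forall>s. Max (range (\<lambda>a. r s a + (\<Sum>y\<in>UNIV. P s a y * h $ y))) = r s (d' s) + (\<Sum>y\<in>UNIV. P s (d' s) y * h $ y)"
    by blast
  define u where "u s = h $ s - hs $ s" for s
  have sumdiff: "(\<Sum>y\<in>UNIV. P s a y * u y) = (\<Sum>y\<in>UNIV. P s a y * h $ y) - (\<Sum>y\<in>UNIV. P s a y * hs $ y)" for s a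
    unfolding u_def by (simp add: algebra_simps sum_subtractf)
  have sub: "u s \<le> (\<Sum>y\<in>UNIV. P s (d' s) y * u y)" for s
  proof -
    have "r s (d' s) + (\<Sum>y\<in>UNIV. P s (d' s) y * hs $ y) \<le> hs $ s + gs $ s"
      using Max_range_ge[of "\<lambda>a. r s a + (\<Sum>y\<in>UNIV. P s a y * hs $ y)" "d' s"] Ths[of s] by simp
    then show ?thesis using d'[rule_format, of s] Th[of s] sumdiff[of s "d' s"] unfolding u_def by linarith
  qed
  have sup: "u s \<ge> (\<Sum>y\<in>UNIV. P s (dS s) y * u y)" for s
  proof -
    have "r s (dS s) + (\<Sum>y\<in>UNIV. P s (dS s) y * h $ y) \<le> h $ s + gs $ s"
      using Max_range_ge[of "\<lambda>a. r s a + (\<Sum>y\<in>UNIV. P s a y * h $ y)" "dS s"] Th[of s] by simp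
    then show ?thesis using dS[of s] sumdiff[of s "dS s"] unfolding u_def by linarith
  qed
  define M where "M = Max (range u)"
  define Mn where "Mn = Min (range u)"
  have "M \<in> range u" unfolding M_def by (rule Max_in) auto
  then obtain sM where sM: "u sM = M" by auto
  have "Mn \<in> range u" unfolding Mn_def by (rule Min_in) auto
  then obtain sN where sN: "u sN = Mn" by auto
  have uM: "u s \<le> M" for s unfolding M_def by (rule Max_ge) auto
  have uN: "Mn \<le> u s" for s unfolding Mn_def by (rule Min_le) auto
  have clA: "u y = M" if "u x = M" "P x (d' x) y > 0" for x y
  proof -
    have "\<forall>y. P x (d' x) y > 0 \<longrightarrow> u y = M"
    proof (rule sum_forces_eq[OF mdp])
      show "\<forall>y. P x (d' x) y > 0 \<longrightarrow> u y \<le> M" using uM by blast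
      show "(\<Sum>y\<in>UNIV. P x (d' x) y * u y) \<ge> M" using sub[of x] that(1) by simp
    qed
    then show ?thesis using that(2) by blast
  qed
  have clB: "u y = Mn" if "u x = Mn" "P x (dS x) y > 0" for x y
  proof -
    have "\<forall>y. P x (dS x) y > 0 \<longrightarrow> - u y = - Mn"
    proof (rule sum_forces_eq[OF mdp])
      show "\<forall>y. P x (dS x) y > 0 \<longrightarrow> - u y \<le> - Mn" using uN by simp
      show "(\<Sum>y\<in>UNIV. P x (dS x) y * - u y) \<ge> - Mn" using sup[of x] that(1) by (simp add: sum_negf)
    qed
    then show ?thesis using that(2) by simp
  qed
  have "M = Mn"
  proof (rule ccontr)
    assume ne: "M \<noteq> Mn"
    define d'' where "d'' s = (if u s = M then d' s else dS s)" for s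
    have "\<exists>x\<in>{s. u s = M}. \<not> transient P (det_pol d'') x"
      by (rule det_closed_recurrent[of sM]) (use sM clA in \<open>auto simp: d''_def\<close>)
    then obtain xA where xA: "u xA = M" "\<not> transient P (det_pol d'') xA" by blast
    have "\<exists>x\<in>{s. u s = Mn}. \<not> transient P (det_pol d'') x"
      by (rule det_closed_recurrent[of sN]) (use sN clB ne in \<open>auto simp: d''_def\<close>)
    then obtain xB where xB: "u xB = Mn" "\<not> transient P (det_pol d'') xB" by blast
    have "(xA, xB) \<in> (edges P (det_pol d''))\<^sup>*" using uc[unfolded unichain_def, rule_format, of d'' xA xB] xA(2) xB(2) by blast
    then have "u xB = M"
    proof (induction rule: rtrancl_induct)
      case base show ?case using xA(1) .
    next
      case (step y z)
      then have "P y (d' y) z > 0" by (simp add: edges_det d''_def)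
      then show ?case using clA step.IH by blast
    qed
    then show False using xB(1) ne by simp
  qed
  have "h = hs + vec M"
  proof -
    have "h $ s = (hs + vec M) $ s" for s using uM[of s] uN[of s] \<open>M = Mn\<close> unfolding u_def by simp
    then show ?thesis by (simp add: vec_eq_iff)
  qed
  then show ?thesis ..
qed

lemma bellman_lip:
  fixes x y :: "real^'s::finite"
  assumes "mdp P"
  shows "norm (bellman P r x - bellman P r y) \<le> sqrt (real CARD('s)) * norm (x - y)"
proof -
  have "norm (bellman P r x - bellman P r y) \<le> sqrt (real DIM(real^'s)) * infnorm (bellman P r x - bellman P r y)"
    by (rule norm_le_infnorm)
  also have "\<dots> \<le> sqrt (real DIM(real^'s)) * norm (x - y)"
    using bellman_nonexp[OF assms, of r x y] infnorm_le_norm[of "x - y"]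
    by (intro mult_left_mono) auto
  finally show ?thesis by simp
qed

lemma bellman_cont:
  fixes P :: "'s::finite \<Rightarrow> 'a::finite \<Rightarrow> 's \<Rightarrow> real"
  assumes "mdp P" shows "continuous_on UNIV (bellman P r)"
proof (rule lipschitz_on_continuous_on)
  show "(sqrt (real CARD('s)))-lipschitz_on UNIV (bellman P r)"
    by (rule lipschitz_onI) (auto simp: dist_norm bellman_lip[OF assms])
qed

lemma bellman_shift': assumes "mdp P"
  shows "bellman P r (v - vec c) = bellman P r v - vec c"
proof -
  have "v - vec c = v + vec (- c)" by (simp add: vec_eq_iff)
  then have "bellman P r (v - vec c) = bellman P r v + vec (- c)" by (simp only:) (rule bellman_shift[OF assms])
  then show ?thesis by (simp add: vec_eq_iff)
qed

lemma resid_conv: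
  fixes P :: "'s::finite \<Rightarrow> 'a::finite \<Rightarrow> 's \<Rightarrow> real" and y :: "nat \<Rightarrow> real^'s"
  assumes mdp: "mdp P" and uc: "unichain P" and mb: "mod_bellman P r gs hs"
    and bnd: "\<And>k. infnorm (y k - hs) \<le> D"
    and res: "(\<lambda>k. bellman P r (y k) - y k - gs) \<longlonglongrightarrow> 0"
  shows "(\<lambda>k. (y k - hs) - vec ((y k - hs) $ s0)) \<longlonglongrightarrow> 0"
proof (rule ccontr)
  define w where "w k = (y k - hs) - vec ((y k - hs) $ s0)" for k
  assume "\<not> (\<lambda>k. (y k - hs) - vec ((y k - hs) $ s0)) \<longlonglongrightarrow> 0"
  then have "\<not> w \<longlonglongrightarrow> 0" unfolding w_def .
  then obtain e where e: "e > 0" and ex: "\<forall>no. \<exists>n\<ge>no. \<not> norm (w n) < e"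
    unfolding LIMSEQ_iff by auto
  have "infinite {n. norm (w n) \<ge> e}"
    unfolding infinite_nat_iff_unbounded_le using ex by (auto simp: not_less)
  then obtain \<sigma> :: "nat \<Rightarrow> nat" where \<sigma>: "strict_mono \<sigma>" "\<And>n. norm (w (\<sigma> n)) \<ge> e"
    using infinite_enumerate by blast
  have wb: "infnorm (w k) \<le> 2 * D" for k
  proof (rule infnorm_le_cart)
    fix i
    have "\<bar>(y k - hs) $ i\<bar> \<le> D" "\<bar>(y k - hs) $ s0\<bar> \<le> D"
      using component_le_infnorm_cart bnd order_trans by blast+
    then show "\<bar>w k $ i\<bar> \<le> 2 * D" unfolding w_def by simp
  qed
  have "bounded (range (w \<circ> \<sigma>))"
    unfolding bounded_iff
  proof (intro exI ballI)
    fix x assume "x \<in> range (w \<circ> \<sigma>)"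
    then obtain k where "x = w (\<sigma> k)" by auto
    then show "norm x \<le> sqrt (real DIM(real^'s)) * (2 * D)"
      using norm_le_infnorm[of x] wb[of "\<sigma> k"] by (smt (verit) mult_left_mono real_sqrt_ge_zero of_nat_0_le_iff)
  qed
  then obtain l \<rho> where \<rho>: "strict_mono (\<rho> :: nat \<Rightarrow> nat)" and lim: "(w \<circ> \<sigma> \<circ> \<rho>) \<longlonglongrightarrow> l"
    using bounded_imp_convergent_subsequence[of "w \<circ> \<sigma>"] by (auto simp: o_assoc)
  have "e \<le> norm l"
    by (rule Lim_norm_lbound[OF _ lim]) (use \<sigma>(2) in auto)
  have ls0: "l $ s0 = 0"
  proof -
    have "(\<lambda>j. (w \<circ> \<sigma> \<circ> \<rho>) j $ s0) \<longlonglongrightarrow> l $ s0" by (rule tendsto_vec_nth[OF lim])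
    moreover have "(\<lambda>j. (w \<circ> \<sigma> \<circ> \<rho>) j $ s0) = (\<lambda>j. 0)" by (simp add: w_def)
    ultimately show ?thesis using LIMSEQ_unique tendsto_const by metis
  qed
  define R where "R z = bellman P r (hs + z) - (hs + z) - gs" for z
  have Rcont: "continuous_on UNIV R"
    unfolding R_def
    by (intro continuous_on_diff continuous_on_add continuous_on_const continuous_on_id
        continuous_on_compose2[OF bellman_cont[OF mdp]]) auto
  have Rw: "R (w k) = bellman P r (y k) - y k - gs" for k
  proof -
    have "hs + w k = y k - vec ((y k - hs) $ s0)" unfolding w_def by simp
    then show ?thesis unfolding R_def using bellman_shift'[OF mdp] by simp
  qed
  have "(\<lambda>j. R ((w \<circ> \<sigma> \<circ> \<rho>) j)) \<longlonglongrightarrow> R l"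
    by (rule continuous_on_tendsto_compose[OF Rcont lim]) auto
  moreover have "(\<lambda>j. R ((w \<circ> \<sigma> \<circ> \<rho>) j)) \<longlonglongrightarrow> 0"
  proof -
    have "((\<lambda>k. bellman P r (y k) - y k - gs) \<circ> (\<sigma> \<circ> \<rho>)) \<longlonglongrightarrow> 0"
      by (rule LIMSEQ_subseq_LIMSEQ[OF res]) (use \<sigma>(1) \<rho> strict_mono_o in blast)
    then show ?thesis unfolding Rw[symmetric] by (simp add: o_def)
  qed
  ultimately have "R l = 0" using LIMSEQ_unique by blast
  then have "bellman P r (hs + l) = (hs + l) + gs" unfolding R_def by (simp add: algebra_simps)
  then obtain c where "hs + l = hs + vec c" using unichain_unique[OF mdp uc mb] by blast
  then have "l = vec c" by simp
  with ls0 have "l = 0" by (simp add: vec_eq_iff)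
  with \<open>e \<le> norm l\<close> e show False by simp
qed

lemma mod_bellman_shift:
  assumes mdp: "mdp P" and mb: "mod_bellman P r gs hs"
  shows "mod_bellman P r gs (hs + vec c)"
proof -
  have e2: "Max (range (\<lambda>a. r s a + (\<Sum>s'\<in>UNIV. P s a s' * (hs + vec c) $ s'))) = (hs + vec c) $ s + gs $ s" for s
  proof -
    have "Max (range (\<lambda>a. r s a + (\<Sum>s'\<in>UNIV. P s a s' * (hs + vec c) $ s'))) =
        Max (range (\<lambda>a. r s a + (\<Sum>s'\<in>UNIV. P s a s' * hs $ s'))) + c"
      unfolding sumP_add_vec[OF mdp] add.assoc[symmetric] by (rule Max_add_commute) auto
    also have "\<dots> = hs $ s + gs $ s + c" using mb unfolding mod_bellman_def by simp
    finally show ?thesis by simp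
  qed
  obtain d where d: "\<forall>s. (\<Sum>s'\<in>UNIV. P s (d s) s' * gs $ s') = gs $ s \<and>
        r s (d s) + (\<Sum>s'\<in>UNIV. P s (d s) s' * hs $ s') = hs $ s + gs $ s"
    using mb unfolding mod_bellman_def by blast
  have "\<forall>s. (\<Sum>s'\<in>UNIV. P s (d s) s' * gs $ s') = gs $ s \<and>
        r s (d s) + (\<Sum>s'\<in>UNIV. P s (d s) s' * (hs + vec c) $ s') = (hs + vec c) $ s + gs $ s"
    using d unfolding sumP_add_vec[OF mdp] by simp
  then show ?thesis using mb e2 unfolding mod_bellman_def by blast
qed

lemma l_lim: "(\<lambda>k. 2 / (real k + 2)) \<longlonglongrightarrow> 0"
proof -
  have "(\<lambda>k. 2 / real (Suc (Suc k))) \<longlonglongrightarrow> 0"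
    using LIMSEQ_Suc[OF LIMSEQ_Suc[OF lim_const_over_n[of 2]]] by simp
  then show ?thesis by (simp add: add.commute)
qed

lemma r_lim: "(\<lambda>k. 8 / (real k + 1)) \<longlonglongrightarrow> 0"
proof -
  have "(\<lambda>k. 8 / real (Suc k)) \<longlonglongrightarrow> 0"
    using LIMSEQ_Suc[OF lim_const_over_n[of 8]] by simp
  then show ?thesis by (simp add: add.commute)
qed

theorem theorem6:
  fixes P :: "'s::finite \<Rightarrow> 'a::finite \<Rightarrow> 's \<Rightarrow> real"
    and r :: "'s \<Rightarrow> 'a \<Rightarrow> real"
    and gs hs h0 :: "real^'s"
    and f :: "real^'s \<Rightarrow> real"
  assumes "mdp P"
    and "weakly_communicating P"
    and "mod_bellman P r gs hs"
    and "continuous_on UNIV f"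
    and "\<forall>x c. f (x + vec c) = f x + c"
  shows "(\<forall>k\<ge>1. \<forall>\<pi>. policy \<pi> \<and> bellman_pol P r \<pi> (arvi P r f h0 k) = bellman P r (arvi P r f h0 k) \<longrightarrow>
            infnorm (gs - gain P r \<pi>)
              \<le> infnorm (bellman P r (arvi P r f h0 k) - arvi P r f h0 k - gs)
          \<and> infnorm (bellman P r (arvi P r f h0 k) - arvi P r f h0 k - gs)
              \<le> 8 / (real k + 1) * infnorm (h0 - hs))
       \<and> (unichain P \<longrightarrow>
          (\<exists>hinf. mod_bellman P r gs hinf \<and>
             (\<lambda>k. arvi P r f h0 k) \<longlonglongrightarrow> hinf \<and>
             (\<lambda>k. vec (f (arvi P r f h0 k))) \<longlonglongrightarrow> gs))"
proof -
  note mdp = assms(1) and mb = assms(3) and fc = assms(4)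
  have fsh: "f (x + vec c) = f x + c" for x c using assms(5) by blast
  obtain m where gsm: "gs = vec m" using gs_const[OF assms(1,2,3)] by blast
  define S where "S x = bellman P r x - gs" for x
  define y where "y = rec_nat h0 (\<lambda>k yk. (2/(real k+2)) *\<^sub>R h0 + (1 - 2/(real k+2)) *\<^sub>R S yk)"
  have y0: "y 0 = h0" by (simp add: y_def)
  have ys: "\<And>k. y (Suc k) = (2/(real k+2)) *\<^sub>R h0 + (1 - 2/(real k+2)) *\<^sub>R S (y k)" by (simp add: y_def)
  have Sne: "infnorm (S x - S z) \<le> infnorm (x - z)" for x z
    unfolding S_def using bellman_nonexp[OF mdp, of r x z] by simp
  have Ths: "bellman P r hs = hs + gs"
  proof -
    have "bellman P r hs $ s = (hs + gs) $ s" for s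
      using mb unfolding mod_bellman_def bellman_def by simp
    then show ?thesis by (simp add: vec_eq_iff)
  qed
  have Sfp: "S hs = hs" unfolding S_def Ths by simp
  note H1 = halpern(1)[of S hs y h0, OF Sne Sfp y0 ys]
  note H2 = halpern(2)[of S hs y h0, OF Sne Sfp y0 ys]
  have shift: "\<exists>c. arvi P r f h0 k = y k + vec c" for k
  proof (induction k)
    case 0 then show ?case by (intro exI[of _ 0]) (simp add: y0)
  next
    case (Suc k)
    then obtain c where c: "arvi P r f h0 k = y k + vec c" by blast
    define l where "l = 2 / (real k + 2)"
    have "arvi P r f h0 (Suc k) = y (Suc k) + vec ((1 - l) * (c - f (arvi P r f h0 k) + m))"
      unfolding arvi.simps ys l_def[symmetric] S_def gsm c bellman_shift[OF mdp]
      by (simp add: vec_eq_iff algebra_simps)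
    then show ?case by blast
  qed
  have SS: "S (y k) - y k = bellman P r (y k) - y k - gs" for k unfolding S_def by (simp add: algebra_simps)
  have resid: "bellman P r (arvi P r f h0 k) - arvi P r f h0 k - gs = S (y k) - y k" for k
  proof -
    obtain c where c: "arvi P r f h0 k = y k + vec c" using shift by blast
    show ?thesis unfolding c bellman_shift[OF mdp] S_def by simp
  qed
  have part1: "infnorm (gs - gain P r \<pi>) \<le> infnorm (bellman P r (arvi P r f h0 k) - arvi P r f h0 k - gs)
          \<and> infnorm (bellman P r (arvi P r f h0 k) - arvi P r f h0 k - gs) \<le> 8 / (real k + 1) * infnorm (h0 - hs)"
    if "policy \<pi>" "bellman_pol P r \<pi> (arvi P r f h0 k) = bellman P r (arvi P r f h0 k)" for k \<pi>
    using gain_bound[OF mdp that, of m] H2[of k] unfolding resid gsm[symmetric] by simp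
  have part2: "\<exists>hinf. mod_bellman P r gs hinf \<and>
             (\<lambda>k. arvi P r f h0 k) \<longlonglongrightarrow> hinf \<and>
             (\<lambda>k. vec (f (arvi P r f h0 k))) \<longlonglongrightarrow> gs" if uc: "unichain P"
  proof -
    define D where "D = infnorm (h0 - hs)"
    define s0 :: 's where "s0 = undefined"
    have res: "(\<lambda>k. bellman P r (y k) - y k - gs) \<longlonglongrightarrow> 0"
    proof (rule Lim_null_comparison)
      show "\<forall>\<^sub>F k in sequentially. norm (bellman P r (y k) - y k - gs) \<le> sqrt (real DIM(real^'s)) * (8 / (real k + 1) * D)"
      proof (intro always_eventually allI)
        fix k
        have "norm (bellman P r (y k) - y k - gs) \<le> sqrt (real DIM(real^'s)) * infnorm (bellman P r (y k) - y k - gs)"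
          by (rule norm_le_infnorm)
        also have "\<dots> \<le> sqrt (real DIM(real^'s)) * (8 / (real k + 1) * D)"
          using H2[of k] unfolding SS D_def by (intro mult_left_mono) auto
        finally show "norm (bellman P r (y k) - y k - gs) \<le> sqrt (real DIM(real^'s)) * (8 / (real k + 1) * D)" .
      qed
      show "(\<lambda>k. sqrt (real DIM(real^'s)) * (8 / (real k + 1) * D)) \<longlonglongrightarrow> 0"
        by (intro tendsto_mult_right_zero tendsto_mult_left_zero r_lim)
    qed
    define w where "w k = (y k - hs) - vec ((y k - hs) $ s0)" for k
    have wlim: "w \<longlonglongrightarrow> 0"
      unfolding w_def by (rule resid_conv[OF mdp uc mb _ res]) (use H1 in auto)
    obtain cf where cf: "\<And>k. arvi P r f h0 k = y k + vec (cf k)" using shift by metis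
    define G where "G z = bellman P r (hs + z) - f (hs + z) *\<^sub>R (1::real^'s)" for z
    have vec1: "vec a = a *\<^sub>R (1::real^'s)" for a by (simp add: vec_eq_iff)
    have Gw: "bellman P r (arvi P r f h0 k) - vec (f (arvi P r f h0 k)) = G (w k)" for k
    proof -
      define a where "a = (y k - hs) $ s0 + cf k"
      have eq: "arvi P r f h0 k = (hs + w k) + vec a"
        unfolding cf w_def a_def by (simp add: vec_eq_iff)
      have b: "bellman P r (arvi P r f h0 k) = bellman P r (hs + w k) + vec a"
        unfolding eq by (rule bellman_shift[OF mdp])
      have ff: "f (arvi P r f h0 k) = f (hs + w k) + a" unfolding eq by (rule fsh)
      show ?thesis unfolding G_def b ff by (simp add: vec_eq_iff)
    qed
    have Gc: "continuous_on UNIV G"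
      unfolding G_def
      by (intro continuous_on_diff continuous_on_scaleR continuous_on_const continuous_on_add continuous_on_id
          continuous_on_compose2[OF bellman_cont[OF mdp]] continuous_on_compose2[OF fc]) auto
    have GwL: "(\<lambda>k. G (w k)) \<longlonglongrightarrow> G 0"
      by (rule continuous_on_tendsto_compose[OF Gc wlim]) auto
    define hinf where "hinf = hs + vec (m - f hs)"
    have G0: "G 0 = hinf" unfolding G_def hinf_def by (simp add: Ths gsm vec1 algebra_simps)
    have "(\<lambda>k. arvi P r f h0 (Suc k)) \<longlonglongrightarrow> hinf"
    proof -
      have "(\<lambda>k. (2 / (real k + 2)) *\<^sub>R h0 + (1 - 2 / (real k + 2)) *\<^sub>R G (w k)) \<longlonglongrightarrow> 0 *\<^sub>R h0 + (1 - 0) *\<^sub>R G 0"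
        by (intro tendsto_intros l_lim GwL)
      then show ?thesis unfolding arvi.simps Gw G0 by simp
    qed
    then have alim: "(\<lambda>k. arvi P r f h0 k) \<longlonglongrightarrow> hinf" by (rule LIMSEQ_imp_Suc)
    have fh: "f hinf = m" unfolding hinf_def fsh by simp
    have flim: "(\<lambda>k. f (arvi P r f h0 k)) \<longlonglongrightarrow> m"
      using continuous_on_tendsto_compose[OF fc alim] fh by auto
    have vlim: "(\<lambda>k. vec (f (arvi P r f h0 k))) \<longlonglongrightarrow> gs"
      unfolding gsm by (rule vec_tendstoI) (simp add: flim)
    have "mod_bellman P r gs hinf" unfolding hinf_def by (rule mod_bellman_shift[OF mdp mb])
    with alim vlim show ?thesis by blast
  qed
  show ?thesis using part1 part2 by blast
qed

end
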